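(* Let $\rho_\lozenge=\rho(1/2,\sqrt{15}/2)$ be the planar unit rhombus with diagonals $1/2$ and $\sqrt{15}/2$, and let $2\rho_\lozenge$ be its dilation by factor $2$ (a planar rhombus with side length $2$ and diagonals $1$ and $\sqrt{15}$, regarded as a closed polygon with $8$ unit edges). If $2\rho_\lozenge$ cannot be domed, then the isosceles triangle with side lengths $(2,2,1)$ cannot be domed and $\rho_\lozenge$ cannot be domed.
   Context: A unit rhombus $\rho(a,b)$ is a closed polygon $[v_1v_2v_3v_4]$ in $\mathbb{R}^3$ with four sides of length $1$ and $|v_1v_3|=a$, $|v_2v_4|=b$. Polygons with integer side lengths are regarded as polygons with unit edges by subdividing each side into unit segments. A closed polygon with unit edges can be domed if there is a finite connected 2-dimensional simplicial complex which is a compact surface with a single boundary cycle, with a map to $\mathbb{R}^3$ linear on simplices sending each triangle to a unit equilateral triangle and the boundary cycle onto the polygon vertex by vertex in cyclic order. *)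

theory Defs
  imports "HOL-Analysis.Analysis"
begin

text \<open>A finite 2-dimensional simplicial complex is given by its set of triangles,
  each a 3-element set of (abstract) vertices; vertices are labelled by naturals.\<close>

definition cedges :: "nat set set \<Rightarrow> nat set set" where
  "cedges K = {e. \<exists>T\<in>K. e \<subseteq> T \<and> card e = 2}"

definition edge_degree :: "nat set set \<Rightarrow> nat set \<Rightarrow> nat" where
  "edge_degree K e = card {T\<in>K. e \<subseteq> T}"

definition boundary_edges :: "nat set set \<Rightarrow> nat set set" where
  "boundary_edges K = {e\<in>cedges K. edge_degree K e = 1}"

definition link_verts :: "nat set set \<Rightarrow> nat \<Rightarrow> nat set" where
  "link_verts K v = {a. {v, a} \<in> cedges K}"

definition link_adj :: "nat set set \<Rightarrow> nat \<Rightarrow> nat \<Rightarrow> nat \<Rightarrow> bool" where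
  "link_adj K v a b \<longleftrightarrow> {v, a, b} \<in> K \<and> a \<noteq> b \<and> a \<noteq> v \<and> b \<noteq> v"

text \<open>Compact connected combinatorial surface (possibly with boundary):
  pure 2-dimensional finite complex, every edge lies in one or two triangles,
  the link of every vertex is connected (hence a path or a cycle), and the
  complex is connected.\<close>
definition surface_complex :: "nat set set \<Rightarrow> bool" where
  "surface_complex K \<longleftrightarrow>
     finite K \<and> K \<noteq> {} \<and> (\<forall>T\<in>K. card T = 3) \<and>
     (\<forall>e\<in>cedges K. edge_degree K e \<le> 2) \<and>
     (\<forall>v\<in>\<Union>K. \<forall>a\<in>link_verts K v. \<forall>b\<in>link_verts K v. (link_adj K v)\<^sup>*\<^sup>* a b) \<and>
     (\<forall>u\<in>\<Union>K. \<forall>w\<in>\<Union>K. (\<lambda>x y. {x, y} \<in> cedges K)\<^sup>*\<^sup>* u w)"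

text \<open>A closed polygon with unit edges, given as the cyclic list of its vertices
  P!0, ..., P!(n-1), can be domed.\<close>
definition can_be_domed :: "(real^3) list \<Rightarrow> bool" where
  "can_be_domed P \<longleftrightarrow>
     (\<exists>K (f :: nat \<Rightarrow> real^3) (w :: nat list).
        surface_complex K \<and>
        length w = length P \<and> distinct w \<and> set w \<subseteq> \<Union>K \<and>
        boundary_edges K = {{w ! i, w ! ((i + 1) mod length w)} | i. i < length w} \<and>
        (\<forall>T\<in>K. \<forall>a\<in>T. \<forall>b\<in>T. a \<noteq> b \<longrightarrow> dist (f a) (f b) = 1) \<and>
        (\<forall>i < length P. f (w ! i) = P ! i))"

definition rho_diamond :: "(real^3) list" where
  "rho_diamond = [vector [1/4, 0, 0], vector [0, sqrt 15 / 4, 0],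
                  vector [-1/4, 0, 0], vector [0, - sqrt 15 / 4, 0]]"

definition two_rho_diamond :: "(real^3) list" where
  "two_rho_diamond = [vector [1/2, 0, 0], vector [1/4, sqrt 15 / 4, 0],
                      vector [0, sqrt 15 / 2, 0], vector [-1/4, sqrt 15 / 4, 0],
                      vector [-1/2, 0, 0], vector [-1/4, - sqrt 15 / 4, 0],
                      vector [0, - sqrt 15 / 2, 0], vector [1/4, - sqrt 15 / 4, 0]]"

text \<open>The isosceles triangle with side lengths (2,2,1), subdivided into 5 unit edges.\<close>
definition tri221 :: "(real^3) list" where
  "tri221 = [vector [-1/2, 0, 0], vector [1/2, 0, 0], vector [1/4, sqrt 15 / 4, 0],
             vector [0, sqrt 15 / 2, 0], vector [-1/4, sqrt 15 / 4, 0]]"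

end

theory Submission
  imports Defs
begin

definition cyc :: "nat list \<Rightarrow> nat set set" where
  "cyc w = {{w ! i, w ! ((i + 1) mod length w)} | i. i < length w}"

fun pe :: "'a list \<Rightarrow> 'a set set" where
  "pe (x#y#zs) = insert {x,y} (pe (y#zs))"
| "pe _ = {}"

lemma pe_Cons: "pe (x#xs) = (if xs = [] then {} else insert {x, hd xs} (pe xs))"
  by (cases xs) auto

lemma pe_nth: "pe xs = {{xs!i, xs!Suc i} | i. Suc i < length xs}"
proof (induction xs rule: pe.induct)
  case (1 x y zs)
  show ?case
  proof
    show "pe (x # y # zs) \<subseteq> {{(x # y # zs) ! i, (x # y # zs) ! Suc i} |i. Suc i < length (x # y # zs)}"
    proof
      fix e assume "e \<in> pe (x # y # zs)"
      then have "e = {x,y} \<or> e \<in> pe (y#zs)" by simp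
      then show "e \<in> {{(x # y # zs) ! i, (x # y # zs) ! Suc i} |i. Suc i < length (x # y # zs)}"
      proof
        assume "e = {x,y}" then show ?thesis by (intro CollectI exI[of _ 0]) auto
      next
        assume "e \<in> pe (y#zs)"
        then obtain i where "e = {(y#zs)!i, (y#zs)!Suc i}" "Suc i < length (y#zs)" using 1 by auto
        then show ?thesis by (intro CollectI exI[of _ "Suc i"]) auto
      qed
    qed
  next
    show "{{(x # y # zs) ! i, (x # y # zs) ! Suc i} |i. Suc i < length (x # y # zs)} \<subseteq> pe (x # y # zs)"
    proof
      fix e assume "e \<in> {{(x # y # zs) ! i, (x # y # zs) ! Suc i} |i. Suc i < length (x # y # zs)}"
      then obtain i where e: "e = {(x # y # zs) ! i, (x # y # zs) ! Suc i}" "Suc i < length (x # y # zs)" by blast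
      show "e \<in> pe (x # y # zs)"
      proof (cases i)
        case 0 then show ?thesis using e by simp
      next
        case (Suc j) then have "e \<in> pe (y#zs)" using e 1 by auto
        then show ?thesis by simp
      qed
    qed
  qed
qed auto

lemma cyc_pe: "w \<noteq> [] \<Longrightarrow> cyc w = insert {last w, hd w} (pe w)"
proof -
  assume w: "w \<noteq> []"
  show ?thesis
  proof
    show "cyc w \<subseteq> insert {last w, hd w} (pe w)"
    proof
      fix e assume "e \<in> cyc w"
      then obtain i where e: "e = {w ! i, w ! ((i + 1) mod length w)}" "i < length w" unfolding cyc_def by blast
      show "e \<in> insert {last w, hd w} (pe w)"
      proof (cases "Suc i < length w")
        case True then show ?thesis using e by (auto simp: pe_nth)
      next
        case False then have "i = length w - 1" using e by auto
        then have "e = {last w, hd w}" using e w by (simp add: last_conv_nth hd_conv_nth)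
        then show ?thesis by simp
      qed
    qed
  next
    show "insert {last w, hd w} (pe w) \<subseteq> cyc w"
    proof
      fix e assume "e \<in> insert {last w, hd w} (pe w)"
      then show "e \<in> cyc w"
      proof
        assume "e = {last w, hd w}"
        then have "e = {w ! (length w - 1), w ! ((length w - 1 + 1) mod length w)}"
          using w by (simp add: last_conv_nth hd_conv_nth)
        then show ?thesis unfolding cyc_def using w by (intro CollectI exI[of _ "length w - 1"]) auto
      next
        assume "e \<in> pe w"
        then obtain i where "e = {w!i, w!Suc i}" "Suc i < length w" by (auto simp: pe_nth)
        then show ?thesis unfolding cyc_def by (intro CollectI exI[of _ i]) auto
      qed
    qed
  qed
qed

lemma pe_append: "pe (xs @ ys) = pe xs \<union> pe ys \<union> (if xs = [] \<or> ys = [] then {} else {{last xs, hd ys}})"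
  by (induction xs rule: pe.induct) (auto simp: pe_Cons)

lemma pe_map: "pe (map h xs) = (`) h ` pe xs"
  by (induction xs rule: pe.induct) auto

lemma pe_rev: "pe (rev xs) = pe xs"
  by (induction xs) (auto simp: pe_append pe_Cons last_rev insert_commute)

lemma pe_subset: "e \<in> pe xs \<Longrightarrow> e \<subseteq> set xs"
  by (induction xs rule: pe.induct) auto


definition relab :: "(nat \<Rightarrow> nat) \<Rightarrow> nat set set \<Rightarrow> nat set set" where
  "relab h K = (`) h ` K"

lemma rtranclp_map:
  assumes "\<And>x y. R x y \<Longrightarrow> R' (h x) (h y)" "R\<^sup>*\<^sup>* a b"
  shows "R'\<^sup>*\<^sup>* (h a) (h b)"
  using assms(2)
proof induction
  case base show ?case by simp
next
  case (step y z) then show ?case using assms(1)[of y z] by (simp add: rtranclp.rtrancl_into_rtrancl)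
qed

lemma relab_Union: "\<Union>(relab h K) = h ` \<Union>K"
  unfolding relab_def by auto

lemma relab_cedges:
  assumes inj: "inj_on h (\<Union>K)"
  shows "cedges (relab h K) = (`) h ` cedges K"
proof
  show "cedges (relab h K) \<subseteq> (`) h ` cedges K"
  proof
    fix e assume "e \<in> cedges (relab h K)"
    then obtain T where T: "T \<in> K" "e \<subseteq> h ` T" "card e = 2" unfolding cedges_def relab_def by auto
    then obtain C where C: "C \<subseteq> T" "e = h ` C" using subset_imageE[OF T(2)] by blast
    have "inj_on h C" using inj C T by (meson Union_upper inj_on_subset order_trans)
    then have "card e = card C" using C by (simp add: card_image)
    then have "card C = 2" using T by simp
    then have "C \<in> cedges K" using C T unfolding cedges_def by auto
    then show "e \<in> (`) h ` cedges K" using C by auto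
  qed
next
  show "(`) h ` cedges K \<subseteq> cedges (relab h K)"
  proof
    fix e assume "e \<in> (`) h ` cedges K"
    then obtain C T where C: "e = h ` C" "T \<in> K" "C \<subseteq> T" "card C = 2" unfolding cedges_def by auto
    have "inj_on h C" using inj C by (meson Union_upper inj_on_subset order_trans)
    then have "card e = card C" using C by (simp add: card_image)
    then have "card e = 2" using C by simp
    then show "e \<in> cedges (relab h K)" using C unfolding cedges_def relab_def by auto
  qed
qed

lemma relab_degree:
  assumes inj: "inj_on h (\<Union>K)" and e: "e \<subseteq> \<Union>K"
  shows "edge_degree (relab h K) (h ` e) = edge_degree K e"
proof -
  have "{T'\<in>relab h K. h ` e \<subseteq> T'} = (`) h ` {T\<in>K. e \<subseteq> T}"
  proof -
    have "\<And>T. T \<in> K \<Longrightarrow> (h ` e \<subseteq> h ` T) = (e \<subseteq> T)"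
    proof -
      fix T assume "T \<in> K"
      then have "T \<subseteq> \<Union>K" by auto
      show "(h ` e \<subseteq> h ` T) = (e \<subseteq> T)"
      proof
        assume H: "h ` e \<subseteq> h ` T"
        show "e \<subseteq> T"
        proof
          fix x assume "x \<in> e"
          then have "h x \<in> h ` T" "x \<in> \<Union>K" using H e by auto
          then show "x \<in> T" using inj_on_image_mem_iff[OF inj \<open>x \<in> \<Union>K\<close> \<open>T \<subseteq> \<Union>K\<close>] by simp
        qed
      qed auto
    qed
    note eq = this
    show ?thesis
    proof (rule set_eqI)
      fix X
      show "X \<in> {T'\<in>relab h K. h ` e \<subseteq> T'} \<longleftrightarrow> X \<in> (`) h ` {T\<in>K. e \<subseteq> T}"
      proof
        assume "X \<in> {T'\<in>relab h K. h ` e \<subseteq> T'}"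
        then obtain T where "T \<in> K" "X = h ` T" "h ` e \<subseteq> X" unfolding relab_def by blast
        then show "X \<in> (`) h ` {T\<in>K. e \<subseteq> T}" using eq[of T] by blast
      next
        assume "X \<in> (`) h ` {T\<in>K. e \<subseteq> T}"
        then obtain T where "T \<in> K" "X = h ` T" "e \<subseteq> T" by blast
        then show "X \<in> {T'\<in>relab h K. h ` e \<subseteq> T'}" unfolding relab_def by blast
      qed
    qed
  qed
  moreover have "inj_on ((`) h) K" using inj by (rule inj_on_image)
  then have "inj_on ((`) h) {T\<in>K. e \<subseteq> T}" by (rule inj_on_subset) auto
  ultimately show ?thesis unfolding edge_degree_def by (simp add: card_image)
qed

lemma relab_surface:
  assumes inj: "inj_on h (\<Union>K)" and S: "surface_complex K"
  shows "surface_complex (relab h K) \<and> boundary_edges (relab h K) = (`) h ` boundary_edges K"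
proof -
  have ce: "cedges (relab h K) = (`) h ` cedges K" using relab_cedges[OF inj] .
  have ceU: "\<And>e. e \<in> cedges K \<Longrightarrow> e \<subseteq> \<Union>K" unfolding cedges_def by auto
  have deg: "\<And>e. e \<in> cedges K \<Longrightarrow> edge_degree (relab h K) (h ` e) = edge_degree K e"
    using relab_degree[OF inj] ceU by blast
  have bd: "boundary_edges (relab h K) = (`) h ` boundary_edges K"
    unfolding boundary_edges_def ce using deg by auto
  have fin: "finite (relab h K)" "relab h K \<noteq> {}" using S unfolding surface_complex_def relab_def by auto
  have c3: "\<forall>T\<in>relab h K. card T = 3"
  proof
    fix T' assume "T' \<in> relab h K"
    then obtain T where "T \<in> K" "T' = h ` T" unfolding relab_def by auto
    moreover then have "inj_on h T" using inj by (meson Union_upper inj_on_subset)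
    ultimately have "card T' = card T" by (simp add: card_image)
    then show "card T' = 3" using S \<open>T \<in> K\<close> unfolding surface_complex_def by simp
  qed
  have dg: "\<forall>e\<in>cedges (relab h K). edge_degree (relab h K) e \<le> 2"
    using S deg unfolding ce surface_complex_def by auto
  have ed: "\<And>x y. {x, y} \<in> cedges K \<Longrightarrow> {h x, h y} \<in> cedges (relab h K)"
  proof -
    fix x y assume a: "{x, y} \<in> cedges K"
    have "h ` {x, y} \<in> (`) h ` cedges K" using a by (rule imageI)
    then show "{h x, h y} \<in> cedges (relab h K)" unfolding ce by simp
  qed
  have conn: "\<forall>u\<in>\<Union>(relab h K). \<forall>w\<in>\<Union>(relab h K). (\<lambda>x y. {x, y} \<in> cedges (relab h K))\<^sup>*\<^sup>* u w"
  proof (intro ballI)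
    fix u w assume "u \<in> \<Union>(relab h K)" "w \<in> \<Union>(relab h K)"
    then obtain u0 w0 where "u0 \<in> \<Union>K" "w0 \<in> \<Union>K" "u = h u0" "w = h w0" unfolding relab_Union by auto
    then show "(\<lambda>x y. {x, y} \<in> cedges (relab h K))\<^sup>*\<^sup>* u w"
      using S ed rtranclp_map[of "\<lambda>x y. {x, y} \<in> cedges K" "\<lambda>x y. {x, y} \<in> cedges (relab h K)" h]
      unfolding surface_complex_def by blast
  qed
  have lk: "\<forall>v\<in>\<Union>(relab h K). \<forall>a\<in>link_verts (relab h K) v. \<forall>b\<in>link_verts (relab h K) v.
      (link_adj (relab h K) v)\<^sup>*\<^sup>* a b"
  proof (intro ballI)
    fix v a b assume v: "v \<in> \<Union>(relab h K)" and a: "a \<in> link_verts (relab h K) v" and b: "b \<in> link_verts (relab h K) v"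
    then obtain v0 where v0: "v0 \<in> \<Union>K" "v = h v0" unfolding relab_Union by auto
    have lv: "\<And>a. a \<in> link_verts (relab h K) v \<Longrightarrow> \<exists>a0. a = h a0 \<and> a0 \<in> link_verts K v0"
    proof -
      fix a assume "a \<in> link_verts (relab h K) v"
      then have "{h v0, a} \<in> (`) h ` cedges K" unfolding link_verts_def ce v0 by simp
      then obtain e where e: "e \<in> cedges K" "{h v0, a} = h ` e" by auto
      then have eU: "e \<subseteq> \<Union>K" using ceU by auto
      have "h v0 \<in> h ` e" using e by auto
      then have "v0 \<in> e" using inj eU v0 by (meson inj_on_image_mem_iff)
      have "a \<in> h ` e" using e by auto
      then obtain a0 where a0: "a0 \<in> e" "a = h a0" by auto
      have "card e = 2" using e unfolding cedges_def by auto
      have "h a0 \<noteq> h v0"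
      proof
        assume "h a0 = h v0"
        then have "h ` e = {h v0}" using e a0 by auto
        moreover have "inj_on h e" using inj eU by (meson inj_on_subset)
        ultimately have "card e = card {h v0}" by (metis card_image)
        then have "card e = 1" by simp
        then show False using \<open>card e = 2\<close> by simp
      qed
      then have "a0 \<noteq> v0" by auto
      have "e = {v0, a0}"
      proof -
        obtain x y where "e = {x, y}" "x \<noteq> y" using \<open>card e = 2\<close> by (meson card_2_iff)
        then show ?thesis using \<open>v0 \<in> e\<close> a0 \<open>a0 \<noteq> v0\<close> by auto
      qed
      then show "\<exists>a0. a = h a0 \<and> a0 \<in> link_verts K v0" using a0 e unfolding link_verts_def by auto
    qed
    obtain a0 b0 where ab: "a = h a0" "a0 \<in> link_verts K v0" "b = h b0" "b0 \<in> link_verts K v0"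
      using lv[OF a] lv[OF b] by blast
    have "(link_adj K v0)\<^sup>*\<^sup>* a0 b0" using S v0 ab unfolding surface_complex_def by blast
    moreover have "\<And>x y. link_adj K v0 x y \<Longrightarrow> link_adj (relab h K) v (h x) (h y)"
    proof -
      fix x y assume l: "link_adj K v0 x y"
      then have T: "{v0, x, y} \<in> K" "x \<noteq> y" "x \<noteq> v0" "y \<noteq> v0" unfolding link_adj_def by auto
      then have "{v0,x,y} \<subseteq> \<Union>K" using Union_upper[OF T(1)] by simp
      then have ij: "inj_on h {v0,x,y}" using inj by (rule inj_on_subset[rotated])
      have "h x \<noteq> h y" by (rule inj_on_contraD[OF ij T(2)]) auto
      moreover have "h x \<noteq> h v0" by (rule inj_on_contraD[OF ij T(3)]) auto
      moreover have "h y \<noteq> h v0" by (rule inj_on_contraD[OF ij T(4)]) auto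
      moreover have "h ` {v0, x, y} \<in> relab h K" unfolding relab_def using T(1) by (rule imageI)
      then have "{h v0, h x, h y} \<in> relab h K" by simp
      ultimately show "link_adj (relab h K) v (h x) (h y)" unfolding link_adj_def v0 by auto
    qed
    ultimately show "(link_adj (relab h K) v)\<^sup>*\<^sup>* a b" using ab rtranclp_map[of "link_adj K v0" "link_adj (relab h K) v" h a0 b0] by simp
  qed
  show ?thesis using fin c3 dg conn lk bd unfolding surface_complex_def by blast
qed


lemma rtranclp_sub:
  assumes "\<And>x y. R x y \<Longrightarrow> R' x y" "R\<^sup>*\<^sup>* a b"
  shows "R'\<^sup>*\<^sup>* a b"
  using rtranclp_map[where h="\<lambda>x. x", of R R' a b] assms by simp

lemma cedges_Un: "cedges (K1 \<union> K2) = cedges K1 \<union> cedges K2"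
  unfolding cedges_def by blast

lemma degree_Un:
  assumes "finite K1" "finite K2" "K1 \<inter> K2 = {}"
  shows "edge_degree (K1 \<union> K2) e = edge_degree K1 e + edge_degree K2 e"
proof -
  have "{T\<in>K1 \<union> K2. e \<subseteq> T} = {T\<in>K1. e \<subseteq> T} \<union> {T\<in>K2. e \<subseteq> T}" by blast
  moreover have "{T\<in>K1. e \<subseteq> T} \<inter> {T\<in>K2. e \<subseteq> T} = {}" using assms(3) by blast
  ultimately show ?thesis unfolding edge_degree_def using assms(1,2) by (simp add: card_Un_disjoint)
qed

lemma degree0:
  assumes "card e = 2" "e \<notin> cedges K"
  shows "edge_degree K e = 0"
proof -
  have "{T\<in>K. e \<subseteq> T} = {}" using assms unfolding cedges_def by blast
  then show ?thesis unfolding edge_degree_def by (metis card.empty)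
qed

lemma bd_sub: "boundary_edges K \<subseteq> cedges K"
  unfolding boundary_edges_def by blast

lemma cedges_card: "e \<in> cedges K \<Longrightarrow> card e = 2"
  unfolding cedges_def by blast

lemma cedges_Union: "{v, a} \<in> cedges K \<Longrightarrow> v \<in> \<Union>K"
  unfolding cedges_def by blast

lemma glue_surface:
  assumes S1: "surface_complex K1" and S2: "surface_complex K2" and disj: "K1 \<inter> K2 = {}"
    and sh: "cedges K1 \<inter> cedges K2 \<subseteq> boundary_edges K1 \<inter> boundary_edges K2"
    and cn: "\<forall>v\<in>\<Union>K1 \<inter> \<Union>K2. \<exists>a. {v, a} \<in> cedges K1 \<inter> cedges K2"
    and ne: "\<Union>K1 \<inter> \<Union>K2 \<noteq> {}"
  shows "surface_complex (K1 \<union> K2) \<and>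
    boundary_edges (K1 \<union> K2) = (boundary_edges K1 \<union> boundary_edges K2) - (cedges K1 \<inter> cedges K2)"
proof -
  have f1: "finite K1" and f2: "finite K2" using S1 S2 unfolding surface_complex_def by auto
  have deg: "\<And>e. edge_degree (K1 \<union> K2) e = edge_degree K1 e + edge_degree K2 e"
    using degree_Un[OF f1 f2 disj] .
  have d1: "\<And>e. e \<in> cedges K1 \<Longrightarrow> edge_degree K1 e \<le> 2" using S1 unfolding surface_complex_def by blast
  have d2: "\<And>e. e \<in> cedges K2 \<Longrightarrow> edge_degree K2 e \<le> 2" using S2 unfolding surface_complex_def by blast
  have b1: "\<And>e. e \<in> boundary_edges K1 \<Longrightarrow> edge_degree K1 e = 1" unfolding boundary_edges_def by blast
  have b2: "\<And>e. e \<in> boundary_edges K2 \<Longrightarrow> edge_degree K2 e = 1" unfolding boundary_edges_def by blast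
  have degcases: "\<And>e. e \<in> cedges K1 \<union> cedges K2 \<Longrightarrow>
     (e \<in> cedges K1 \<inter> cedges K2 \<and> edge_degree (K1 \<union> K2) e = 2) \<or>
     (e \<in> cedges K1 - cedges K2 \<and> edge_degree (K1 \<union> K2) e = edge_degree K1 e) \<or>
     (e \<in> cedges K2 - cedges K1 \<and> edge_degree (K1 \<union> K2) e = edge_degree K2 e)"
  proof -
    fix e assume e: "e \<in> cedges K1 \<union> cedges K2"
    then have ce: "card e = 2" using cedges_card by blast
    show "?thesis e"
    proof (cases "e \<in> cedges K1")
      case True note T1 = this
      show ?thesis
      proof (cases "e \<in> cedges K2")
        case True
        then have "e \<in> boundary_edges K1" "e \<in> boundary_edges K2" using T1 sh by blast+
        then show ?thesis using deg[of e] b1 b2 T1 True by simp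
      next
        case False
        then show ?thesis using deg[of e] degree0[OF ce False] T1 by simp
      qed
    next
      case False
      then have "e \<in> cedges K2" using e by blast
      then show ?thesis using deg[of e] degree0[OF ce False] False by simp
    qed
  qed
  have bd: "boundary_edges (K1 \<union> K2) = (boundary_edges K1 \<union> boundary_edges K2) - (cedges K1 \<inter> cedges K2)"
  proof (rule set_eqI)
    fix e
    show "e \<in> boundary_edges (K1 \<union> K2) \<longleftrightarrow> e \<in> (boundary_edges K1 \<union> boundary_edges K2) - (cedges K1 \<inter> cedges K2)"
    proof (cases "e \<in> cedges K1 \<union> cedges K2")
      case True
      then show ?thesis using degcases[OF True] bd_sub[of K1] bd_sub[of K2]
        unfolding boundary_edges_def cedges_Un by auto
    next
      case False
      then show ?thesis using bd_sub[of K1] bd_sub[of K2] unfolding boundary_edges_def cedges_Un by blast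
    qed
  qed
  have dg: "\<forall>e\<in>cedges (K1 \<union> K2). edge_degree (K1 \<union> K2) e \<le> 2"
  proof
    fix e assume "e \<in> cedges (K1 \<union> K2)"
    then have "e \<in> cedges K1 \<union> cedges K2" unfolding cedges_Un .
    then show "edge_degree (K1 \<union> K2) e \<le> 2" using degcases d1 d2 by fastforce
  qed
  have fin: "finite (K1 \<union> K2)" "K1 \<union> K2 \<noteq> {}" using S1 S2 unfolding surface_complex_def by auto
  have c3: "\<forall>T\<in>K1 \<union> K2. card T = 3" using S1 S2 unfolding surface_complex_def by blast
  have lv: "\<And>v. link_verts (K1 \<union> K2) v = link_verts K1 v \<union> link_verts K2 v"
    unfolding link_verts_def cedges_Un by blast
  have la1: "\<And>v x y. link_adj K1 v x y \<Longrightarrow> link_adj (K1 \<union> K2) v x y" unfolding link_adj_def by blast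
  have la2: "\<And>v x y. link_adj K2 v x y \<Longrightarrow> link_adj (K1 \<union> K2) v x y" unfolding link_adj_def by blast
  have L1: "\<And>v a b. a \<in> link_verts K1 v \<Longrightarrow> b \<in> link_verts K1 v \<Longrightarrow> (link_adj (K1 \<union> K2) v)\<^sup>*\<^sup>* a b"
  proof -
    fix v a b assume a: "a \<in> link_verts K1 v" and b: "b \<in> link_verts K1 v"
    then have "v \<in> \<Union>K1" unfolding link_verts_def using cedges_Union by blast
    then have "(link_adj K1 v)\<^sup>*\<^sup>* a b" using S1 a b unfolding surface_complex_def by blast
    then show "(link_adj (K1 \<union> K2) v)\<^sup>*\<^sup>* a b" using rtranclp_sub la1 by metis
  qed
  have L2: "\<And>v a b. a \<in> link_verts K2 v \<Longrightarrow> b \<in> link_verts K2 v \<Longrightarrow> (link_adj (K1 \<union> K2) v)\<^sup>*\<^sup>* a b"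
  proof -
    fix v a b assume a: "a \<in> link_verts K2 v" and b: "b \<in> link_verts K2 v"
    then have "v \<in> \<Union>K2" unfolding link_verts_def using cedges_Union by blast
    then have "(link_adj K2 v)\<^sup>*\<^sup>* a b" using S2 a b unfolding surface_complex_def by blast
    then show "(link_adj (K1 \<union> K2) v)\<^sup>*\<^sup>* a b" using rtranclp_sub la2 by metis
  qed
  have L12: "\<And>v a b. a \<in> link_verts K1 v \<Longrightarrow> b \<in> link_verts K2 v \<Longrightarrow> (link_adj (K1 \<union> K2) v)\<^sup>*\<^sup>* a b"
  proof -
    fix v a b assume a: "a \<in> link_verts K1 v" and b: "b \<in> link_verts K2 v"
    then have "v \<in> \<Union>K1" "v \<in> \<Union>K2" unfolding link_verts_def using cedges_Union by blast+
    then obtain c where c: "{v, c} \<in> cedges K1" "{v, c} \<in> cedges K2" using cn by blast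
    then have "c \<in> link_verts K1 v" "c \<in> link_verts K2 v" unfolding link_verts_def by auto
    then show "(link_adj (K1 \<union> K2) v)\<^sup>*\<^sup>* a b" using L1[OF a] L2[OF _ b] by (meson rtranclp_trans)
  qed
  have lk: "\<forall>v\<in>\<Union>(K1 \<union> K2). \<forall>a\<in>link_verts (K1 \<union> K2) v. \<forall>b\<in>link_verts (K1 \<union> K2) v.
      (link_adj (K1 \<union> K2) v)\<^sup>*\<^sup>* a b"
  proof (intro ballI)
    fix v a b assume "a \<in> link_verts (K1 \<union> K2) v" "b \<in> link_verts (K1 \<union> K2) v"
    then have a: "a \<in> link_verts K1 v \<or> a \<in> link_verts K2 v" and b: "b \<in> link_verts K1 v \<or> b \<in> link_verts K2 v"
      unfolding lv by auto
    have sym: "\<And>x y. link_adj (K1 \<union> K2) v x y \<Longrightarrow> link_adj (K1 \<union> K2) v y x"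
      unfolding link_adj_def by (simp add: insert_commute)
    have L21: "a \<in> link_verts K2 v \<Longrightarrow> b \<in> link_verts K1 v \<Longrightarrow> (link_adj (K1 \<union> K2) v)\<^sup>*\<^sup>* a b"
    proof -
      assume "a \<in> link_verts K2 v" "b \<in> link_verts K1 v"
      then have "(link_adj (K1 \<union> K2) v)\<^sup>*\<^sup>* b a" using L12 by blast
      moreover have "symp (link_adj (K1 \<union> K2) v)" using sym by (rule sympI)
      ultimately show ?thesis by (metis sympD symp_rtranclp)
    qed
    show "(link_adj (K1 \<union> K2) v)\<^sup>*\<^sup>* a b" using a b L1 L2 L12 L21 by blast
  qed
  have E1: "\<And>x y. {x, y} \<in> cedges K1 \<Longrightarrow> {x, y} \<in> cedges (K1 \<union> K2)" unfolding cedges_Un by blast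
  have E2: "\<And>x y. {x, y} \<in> cedges K2 \<Longrightarrow> {x, y} \<in> cedges (K1 \<union> K2)" unfolding cedges_Un by blast
  let ?R = "\<lambda>x y. {x, y} \<in> cedges (K1 \<union> K2)"
  have C1: "\<And>u w. u \<in> \<Union>K1 \<Longrightarrow> w \<in> \<Union>K1 \<Longrightarrow> ?R\<^sup>*\<^sup>* u w"
  proof -
    fix u w assume "u \<in> \<Union>K1" "w \<in> \<Union>K1"
    then have "(\<lambda>x y. {x, y} \<in> cedges K1)\<^sup>*\<^sup>* u w" using S1 unfolding surface_complex_def by blast
    then show "?R\<^sup>*\<^sup>* u w" using rtranclp_sub[of "\<lambda>x y. {x, y} \<in> cedges K1" ?R] E1 by blast
  qed
  have C2: "\<And>u w. u \<in> \<Union>K2 \<Longrightarrow> w \<in> \<Union>K2 \<Longrightarrow> ?R\<^sup>*\<^sup>* u w"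
  proof -
    fix u w assume "u \<in> \<Union>K2" "w \<in> \<Union>K2"
    then have "(\<lambda>x y. {x, y} \<in> cedges K2)\<^sup>*\<^sup>* u w" using S2 unfolding surface_complex_def by blast
    then show "?R\<^sup>*\<^sup>* u w" using rtranclp_sub[of "\<lambda>x y. {x, y} \<in> cedges K2" ?R] E2 by blast
  qed
  obtain z where z: "z \<in> \<Union>K1" "z \<in> \<Union>K2" using ne by blast
  have symR: "symp ?R" unfolding symp_def by (simp add: insert_commute)
  have conn: "\<forall>u\<in>\<Union>(K1 \<union> K2). \<forall>w\<in>\<Union>(K1 \<union> K2). ?R\<^sup>*\<^sup>* u w"
  proof (intro ballI)
    fix u w assume u: "u \<in> \<Union>(K1 \<union> K2)" and w: "w \<in> \<Union>(K1 \<union> K2)"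
    have "?R\<^sup>*\<^sup>* u z"
    proof (cases "u \<in> \<Union>K1")
      case True then show ?thesis using C1 z by blast
    next
      case False then have "u \<in> \<Union>K2" using u by blast
      then show ?thesis using C2 z by blast
    qed
    moreover have "?R\<^sup>*\<^sup>* z w"
    proof (cases "w \<in> \<Union>K1")
      case True then show ?thesis using C1 z by blast
    next
      case False then have "w \<in> \<Union>K2" using w by blast
      then show ?thesis using C2 z by blast
    qed
    ultimately show "?R\<^sup>*\<^sup>* u w" by (rule rtranclp_trans)
  qed
  show ?thesis using fin c3 dg lk conn bd unfolding surface_complex_def by blast
qed


lemma domed_intro:
  assumes "surface_complex K" "distinct w" "set w \<subseteq> \<Union>K" "boundary_edges K = cyc w"
    "\<forall>T\<in>K. \<forall>a\<in>T. \<forall>b\<in>T. a \<noteq> b \<longrightarrow> dist (f a) (f b) = 1" "map f w = P"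
  shows "can_be_domed P"
proof -
  have L: "length w = length P" using assms(6) by auto
  have N: "\<forall>i < length P. f (w ! i) = P ! i" using assms(6) by auto
  have bd: "boundary_edges K = {{w ! i, w ! ((i + 1) mod length w)} | i. i < length w}"
    using assms(4) by (simp only: cyc_def)
  have "surface_complex K \<and> length w = length P \<and> distinct w \<and> set w \<subseteq> \<Union>K \<and> boundary_edges K = {{w ! i, w ! ((i + 1) mod length w)} | i. i < length w}
    \<and> (\<forall>T\<in>K. \<forall>a\<in>T. \<forall>b\<in>T. a \<noteq> b \<longrightarrow> dist (f a) (f b) = 1) \<and> (\<forall>i < length P. f (w ! i) = P ! i)"
    using assms(1,2,3,5) L N bd by (intro conjI)
  then show ?thesis unfolding can_be_domed_def by (intro exI)
qed

lemma domed_elim: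
  assumes "can_be_domed P"
  obtains K f w where "surface_complex K" "distinct w" "set w \<subseteq> \<Union>K" "boundary_edges K = cyc w"
    "\<forall>T\<in>K. \<forall>a\<in>T. \<forall>b\<in>T. a \<noteq> b \<longrightarrow> dist (f a) (f b) = 1" "map f w = P"
proof -
  obtain K f w where H: "surface_complex K" "length w = length P" "distinct w" "set w \<subseteq> \<Union>K"
        "boundary_edges K = {{w ! i, w ! ((i + 1) mod length w)} | i. i < length w}"
        "\<forall>T\<in>K. \<forall>a\<in>T. \<forall>b\<in>T. a \<noteq> b \<longrightarrow> dist (f a) (f b) = 1"
        "\<forall>i < length P. f (w ! i) = P ! i"
    using assms unfolding can_be_domed_def by (elim exE conjE) 
  have m: "map f w = P" using H(2,7) by (simp add: list_eq_iff_nth_eq)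
  have c: "boundary_edges K = cyc w" using H(5) by (simp only: cyc_def)
  show ?thesis using that[OF H(1) H(3) H(4) c H(6) m] .
qed

lemma cyc_rotate1: "cyc (rotate1 w) = cyc w"
proof (cases w)
  case Nil then show ?thesis by simp
next
  case (Cons x xs)
  show ?thesis
  proof (cases "xs = []")
    case True then show ?thesis using Cons by simp
  next
    case False
    have "cyc (rotate1 w) = insert {x, hd xs} (pe xs \<union> {{last xs, x}})"
      using Cons False by (simp add: cyc_pe pe_append)
    moreover have "cyc w = insert {last xs, x} (insert {x, hd xs} (pe xs))"
      using Cons False by (simp add: cyc_pe pe_Cons)
    ultimately show ?thesis by auto
  qed
qed

lemma cyc_rev: "cyc (rev w) = cyc w"
proof (cases "w = []")
  case True then show ?thesis by simp
next
  case False
  then show ?thesis by (simp add: cyc_pe pe_rev last_rev hd_rev insert_commute)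
qed

lemma domed_rotate1:
  assumes "can_be_domed P" shows "can_be_domed (rotate1 P)"
proof -
  obtain K f w where H: "surface_complex K" "distinct w" "set w \<subseteq> \<Union>K" "boundary_edges K = cyc w"
    "\<forall>T\<in>K. \<forall>a\<in>T. \<forall>b\<in>T. a \<noteq> b \<longrightarrow> dist (f a) (f b) = 1" "map f w = P"
    using domed_elim[OF assms] by metis
  show ?thesis
    by (rule domed_intro[of K "rotate1 w" f]) (use H in \<open>auto simp: cyc_rotate1 rotate1_map[symmetric]\<close>)
qed

lemma domed_rotate:
  assumes "can_be_domed P" shows "can_be_domed (rotate n P)"
  using assms by (induction n) (auto simp: domed_rotate1)

lemma domed_rev:
  assumes "can_be_domed P" shows "can_be_domed (rev P)"
proof -
  obtain K f w where H: "surface_complex K" "distinct w" "set w \<subseteq> \<Union>K" "boundary_edges K = cyc w"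
    "\<forall>T\<in>K. \<forall>a\<in>T. \<forall>b\<in>T. a \<noteq> b \<longrightarrow> dist (f a) (f b) = 1" "map f w = P"
    using domed_elim[OF assms] by metis
  show ?thesis
    by (rule domed_intro[of K "rev w" f]) (use H in \<open>auto simp: cyc_rev rev_map\<close>)
qed

lemma domed_iso:
  assumes "can_be_domed P" "\<And>x y. dist (g x) (g y) = dist x y" shows "can_be_domed (map g P)"
proof -
  obtain K f w where H: "surface_complex K" "distinct w" "set w \<subseteq> \<Union>K" "boundary_edges K = cyc w"
    "\<forall>T\<in>K. \<forall>a\<in>T. \<forall>b\<in>T. a \<noteq> b \<longrightarrow> dist (f a) (f b) = 1" "map f w = P"
    using domed_elim[OF assms(1)] by metis
  show ?thesis
    by (rule domed_intro[of K w "g \<circ> f"]) (use H assms(2) in auto)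
qed


lemma cyc_map: "cyc (map h w) = (`) h ` cyc w"
proof (cases "w = []")
  case True then show ?thesis by (simp add: cyc_def)
next
  case False
  then show ?thesis by (simp add: cyc_pe pe_map last_map hd_map)
qed

lemma cyc_app: "S \<noteq> [] \<Longrightarrow> X \<noteq> [] \<Longrightarrow> cyc (S @ X) = insert {last X, hd S} (pe S \<union> pe X \<union> {{last S, hd X}})"
  by (simp add: cyc_pe pe_append)

lemma cyc_new: "X \<noteq> [] \<Longrightarrow> Y \<noteq> [] \<Longrightarrow>
  cyc ([a] @ X @ [b] @ rev Y) = {{hd Y, a}, {a, hd X}, {last X, b}, {b, last Y}} \<union> pe X \<union> pe Y"
  by (auto simp: cyc_pe pe_append pe_rev last_rev hd_rev pe_Cons)

lemma pe_ne: "e \<in> pe xs \<Longrightarrow> e \<noteq> {}"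
  unfolding pe_nth by auto

lemma unit_relab:
  assumes "\<forall>T\<in>K. \<forall>a\<in>T. \<forall>b\<in>T. a \<noteq> b \<longrightarrow> dist (g a) (g b) = 1" "\<And>x. f (h x) = g x"
  shows "\<forall>T\<in>relab h K. \<forall>a\<in>T. \<forall>b\<in>T. a \<noteq> b \<longrightarrow> dist (f a) (f b) = (1::real)"
proof (intro ballI impI)
  fix T a b assume "T \<in> relab h K" "a \<in> T" "b \<in> T" "a \<noteq> b"
  then obtain T0 a0 b0 where "T0 \<in> K" "a0 \<in> T0" "b0 \<in> T0" "a = h a0" "b = h b0" unfolding relab_def by blast
  moreover then have "a0 \<noteq> b0" using \<open>a \<noteq> b\<close> by blast
  ultimately show "dist (f a) (f b) = 1" using assms by simp
qed

lemma three_adj: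
  assumes "i < k" "j < k" "l < k" "i \<noteq> j" "j \<noteq> l" "i \<noteq> l"
    "j = Suc i \<or> i = Suc j" "l = Suc j \<or> j = Suc l" "l = Suc i \<or> i = Suc l"
  shows False
  using assms by presburger

lemma domed_glue:
  fixes S X Y :: "(real^3) list"
  assumes d1: "can_be_domed (S @ X)" and d2: "can_be_domed (S @ Y)"
    and k2: "2 \<le> length S" and Xne: "X \<noteq> []" and Yne: "Y \<noteq> []"
    and geo: "\<And>i j. i < length S \<Longrightarrow> j < length S \<Longrightarrow> dist (S!i) (S!j) = 1 \<Longrightarrow> j = Suc i \<or> i = Suc j"
  shows "can_be_domed ([last S] @ X @ [hd S] @ rev Y)"
proof -
  obtain K1 f1 w1 where H1: "surface_complex K1" "distinct w1" "set w1 \<subseteq> \<Union>K1" "boundary_edges K1 = cyc w1"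
    "\<forall>T\<in>K1. \<forall>a\<in>T. \<forall>b\<in>T. a \<noteq> b \<longrightarrow> dist (f1 a) (f1 b) = 1" "map f1 w1 = S @ X"
    using domed_elim[OF d1] by metis
  obtain K2 f2 w2 where H2: "surface_complex K2" "distinct w2" "set w2 \<subseteq> \<Union>K2" "boundary_edges K2 = cyc w2"
    "\<forall>T\<in>K2. \<forall>a\<in>T. \<forall>b\<in>T. a \<noteq> b \<longrightarrow> dist (f2 a) (f2 b) = 1" "map f2 w2 = S @ Y"
    using domed_elim[OF d2] by metis
  define k where "k = length S"
  define S1 where "S1 = take k w1"
  define X1 where "X1 = drop k w1"
  define S2 where "S2 = take k w2"
  define X2 where "X2 = drop k w2"
  have lw1: "length w1 = k + length X" using H1(6) k_def by (metis length_append length_map)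
  have lw2: "length w2 = k + length Y" using H2(6) k_def by (metis length_append length_map)
  have w1: "w1 = S1 @ X1" unfolding S1_def X1_def by simp
  have w2: "w2 = S2 @ X2" unfolding S2_def X2_def by simp
  have lS1: "length S1 = k" unfolding S1_def using lw1 by simp
  have lS2: "length S2 = k" unfolding S2_def using lw2 by simp
  have mS1: "map f1 S1 = S" unfolding S1_def k_def using H1(6) by (metis append_eq_conv_conj take_map)
  have mX1: "map f1 X1 = X" unfolding X1_def k_def using H1(6) by (metis append_eq_conv_conj drop_map)
  have mS2: "map f2 S2 = S" unfolding S2_def k_def using H2(6) by (metis append_eq_conv_conj take_map)
  have mX2: "map f2 X2 = Y" unfolding X2_def k_def using H2(6) by (metis append_eq_conv_conj drop_map)
  have X1ne: "X1 \<noteq> []" using mX1 Xne by auto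
  have X2ne: "X2 \<noteq> []" using mX2 Yne by auto
  have S1ne: "S1 \<noteq> []" using lS1 k2 k_def by auto
  have dS1: "distinct S1" and dX1: "distinct X1" and dj1: "set S1 \<inter> set X1 = {}" using H1(2) w1 by auto
  have dS2: "distinct S2" and dX2: "distinct X2" and dj2: "set S2 \<inter> set X2 = {}" using H2(2) w2 by auto
  define h1 :: "nat \<Rightarrow> nat" where "h1 = (\<lambda>x. 2 * x)"
  define h2 :: "nat \<Rightarrow> nat" where
    "h2 = (\<lambda>x. case map_of (zip S2 S1) x of Some y \<Rightarrow> 2 * y | None \<Rightarrow> 2 * x + 1)"
  have h2S: "\<And>j. j < k \<Longrightarrow> h2 (S2 ! j) = h1 (S1 ! j)"
  proof -
    fix j assume "j < k"
    then have "map_of (zip S2 S1) (S2 ! j) = Some (S1 ! j)"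
      using map_of_zip_nth[of S2 S1 j] lS1 lS2 dS2 by simp
    then show "h2 (S2 ! j) = h1 (S1 ! j)" unfolding h2_def h1_def by simp
  qed
  have h2N: "\<And>x. x \<notin> set S2 \<Longrightarrow> h2 x = 2 * x + 1"
  proof -
    fix x assume "x \<notin> set S2"
    then have "map_of (zip S2 S1) x = None" by (auto simp: map_of_eq_None_iff dest: set_zip_leftD)
    then show "h2 x = 2 * x + 1" unfolding h2_def by simp
  qed
  have h2inS: "\<And>x. x \<in> set S2 \<Longrightarrow> \<exists>j<k. x = S2 ! j \<and> h2 x = h1 (S1 ! j)"
    using h2S lS2 by (metis in_set_conv_nth)
  have inj1: "inj h1" unfolding h1_def by (simp add: inj_on_def)
  have inj2: "inj h2"
  proof (rule injI)
    fix x y assume e: "h2 x = h2 y"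
    show "x = y"
    proof (cases "x \<in> set S2")
      case True
      then obtain i where i: "i < k" "x = S2 ! i" "h2 x = h1 (S1 ! i)" using h2inS by blast
      show ?thesis
      proof (cases "y \<in> set S2")
        case True
        then obtain j where j: "j < k" "y = S2 ! j" "h2 y = h1 (S1 ! j)" using h2inS by blast
        then have "S1 ! i = S1 ! j" using i e unfolding h1_def by simp
        then have "i = j" using dS1 i j lS1 by (simp add: nth_eq_iff_index_eq)
        then show ?thesis using i j by simp
      next
        case False
        then have "h2 y = 2 * y + 1" by (rule h2N)
        then have "2 * (S1 ! i) = 2 * y + 1" using e i unfolding h1_def by simp
        then show ?thesis by presburger
      qed
    next
      case False
      then have hx: "h2 x = 2 * x + 1" by (rule h2N)
      show ?thesis
      proof (cases "y \<in> set S2")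
        case True
        then obtain j where j: "j < k" "y = S2 ! j" "h2 y = h1 (S1 ! j)" using h2inS by blast
        then have "2 * (S1 ! j) = 2 * x + 1" using e hx unfolding h1_def by simp
        then show ?thesis by presburger
      next
        case False
        then have "h2 y = 2 * y + 1" by (rule h2N)
        then show ?thesis using e hx by simp
      qed
    qed
  qed
  define Sv where "Sv = map h1 S1"
  have Sv2: "map h2 S2 = Sv" unfolding Sv_def using h2S lS1 lS2 by (simp add: list_eq_iff_nth_eq)
  have lSv: "length Sv = k" unfolding Sv_def using lS1 by simp
  define X1' where "X1' = map h1 X1"
  define X2' where "X2' = map h2 X2"
  define f :: "nat \<Rightarrow> real^3" where "f = (\<lambda>z. if even z then f1 (z div 2) else f2 (z div 2))"
  have fh1: "\<And>x. f (h1 x) = f1 x" unfolding f_def h1_def by simp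
  have fh2: "\<And>y. f (h2 y) = f2 y"
  proof -
    fix y show "f (h2 y) = f2 y"
    proof (cases "y \<in> set S2")
      case True
      then obtain j where j: "j < k" "y = S2 ! j" "h2 y = h1 (S1 ! j)" using h2inS by blast
      have "f1 (S1 ! j) = S ! j" using mS1 j lS1 by (metis nth_map)
      moreover have "f2 (S2 ! j) = S ! j" using mS2 j lS2 by (metis nth_map)
      ultimately show ?thesis using j fh1 by simp
    next
      case False
      then show ?thesis using h2N unfolding f_def by simp
    qed
  qed
  have fSv: "\<And>i. i < k \<Longrightarrow> f (Sv ! i) = S ! i"
    unfolding Sv_def using fh1 mS1 lS1 by (metis nth_map)
  define K1' where "K1' = relab h1 K1"
  define K2' where "K2' = relab h2 K2"
  have R1: "surface_complex K1'" "boundary_edges K1' = cyc (Sv @ X1')"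
    using relab_surface[of h1 K1] inj1 H1(1) H1(4) unfolding K1'_def
    by (auto simp: cyc_map[symmetric] w1 Sv_def X1'_def inj_on_subset)
  have R2: "surface_complex K2'" "boundary_edges K2' = cyc (Sv @ X2')"
    using relab_surface[of h2 K2] inj2 H2(1) H2(4) unfolding K2'_def
    by (auto simp: cyc_map[symmetric] w2 Sv2[symmetric] X2'_def inj_on_subset)
  have U1: "\<Union>K1' = h1 ` \<Union>K1" unfolding K1'_def by (rule relab_Union)
  have U2: "\<Union>K2' = h2 ` \<Union>K2" unfolding K2'_def by (rule relab_Union)
  have Sv_sub1: "set Sv \<subseteq> \<Union>K1'" unfolding U1 Sv_def using H1(3) w1 by auto
  have Sv_sub2: "set Sv \<subseteq> \<Union>K2'" unfolding U2 Sv2[symmetric] using H2(3) w2 by auto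
  have UI: "\<Union>K1' \<inter> \<Union>K2' \<subseteq> set Sv"
  proof
    fix z assume "z \<in> \<Union>K1' \<inter> \<Union>K2'"
    then obtain a b where ab: "z = h1 a" "z = h2 b" unfolding U1 U2 by blast
    show "z \<in> set Sv"
    proof (cases "b \<in> set S2")
      case True
      then show ?thesis using ab unfolding Sv2[symmetric] by (metis image_eqI set_map)
    next
      case False
      then have "h2 b = 2 * b + 1" by (rule h2N)
      then have "2 * a = 2 * b + 1" using ab unfolding h1_def by simp
      then have False by presburger
      then show ?thesis by simp
    qed
  qed
  have unit1: "\<forall>T\<in>K1'. \<forall>a\<in>T. \<forall>b\<in>T. a \<noteq> b \<longrightarrow> dist (f a) (f b) = 1"
    unfolding K1'_def using unit_relab[OF H1(5)] fh1 by blast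
  have unit2: "\<forall>T\<in>K2'. \<forall>a\<in>T. \<forall>b\<in>T. a \<noteq> b \<longrightarrow> dist (f a) (f b) = 1"
    unfolding K2'_def using unit_relab[OF H2(5)] fh2 by blast
  have Svne: "Sv \<noteq> []" using S1ne unfolding Sv_def by simp
  have X1'ne: "X1' \<noteq> []" using X1ne unfolding X1'_def by simp
  have X2'ne: "X2' \<noteq> []" using X2ne unfolding X2'_def by simp
  have peSv1: "pe Sv \<subseteq> boundary_edges K1'" unfolding R1 cyc_app[OF Svne X1'ne] by blast
  have peSv2: "pe Sv \<subseteq> boundary_edges K2'" unfolding R2 cyc_app[OF Svne X2'ne] by blast
  have adjpe: "\<And>i j. i < k \<Longrightarrow> j < k \<Longrightarrow> j = Suc i \<or> i = Suc j \<Longrightarrow> {Sv ! i, Sv ! j} \<in> pe Sv"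
  proof -
    fix i j assume "i < k" "j < k" "j = Suc i \<or> i = Suc j"
    then show "{Sv ! i, Sv ! j} \<in> pe Sv" unfolding pe_nth using lSv by (auto simp: insert_commute)
  qed
  have Ced: "cedges K1' \<inter> cedges K2' \<subseteq> pe Sv"
  proof
    fix e assume e: "e \<in> cedges K1' \<inter> cedges K2'"
    then obtain T where T: "T \<in> K1'" "e \<subseteq> T" "card e = 2" unfolding cedges_def by blast
    obtain T' where T': "T' \<in> K2'" "e \<subseteq> T'" using e unfolding cedges_def by blast
    obtain a b where ab: "e = {a, b}" "a \<noteq> b" using T(3) by (meson card_2_iff)
    have "a \<in> set Sv" "b \<in> set Sv" using UI T T' ab by blast+
    then obtain i j where ij: "i < k" "a = Sv ! i" "j < k" "b = Sv ! j" unfolding in_set_conv_nth lSv by blast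
    have "dist (f a) (f b) = 1" using unit1 T ab by blast
    then have "dist (S ! i) (S ! j) = 1" using fSv ij by simp
    then have "j = Suc i \<or> i = Suc j" using geo ij k_def by blast
    then show "e \<in> pe Sv" using adjpe ij ab by blast
  qed
  have sh: "cedges K1' \<inter> cedges K2' \<subseteq> boundary_edges K1' \<inter> boundary_edges K2'"
    using Ced peSv1 peSv2 by blast
  have CI: "cedges K1' \<inter> cedges K2' = pe Sv"
    using Ced peSv1 peSv2 bd_sub[of K1'] bd_sub[of K2'] by blast
  have disj: "K1' \<inter> K2' = {}"
  proof (rule ccontr)
    assume "K1' \<inter> K2' \<noteq> {}"
    then obtain T where T: "T \<in> K1'" "T \<in> K2'" by blast
    then have "card T = 3" using R1(1) unfolding surface_complex_def by blast
    then obtain a b c where abc: "T = {a, b, c}" "a \<noteq> b" "b \<noteq> c" "a \<noteq> c" by (meson card_3_iff)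
    have "T \<subseteq> set Sv" using T UI by blast
    then have "a \<in> set Sv" "b \<in> set Sv" "c \<in> set Sv" using abc by auto
    then obtain i j l where ijl: "i < k" "a = Sv ! i" "j < k" "b = Sv ! j" "l < k" "c = Sv ! l"
      unfolding in_set_conv_nth lSv by blast
    have u: "\<And>x y. x \<in> T \<Longrightarrow> y \<in> T \<Longrightarrow> x \<noteq> y \<Longrightarrow> dist (f x) (f y) = 1"
      using unit1 T(1) by blast
    have "dist (f a) (f b) = 1" "dist (f b) (f c) = 1" "dist (f a) (f c) = 1"
      using u abc by simp_all
    then have "dist (S ! i) (S ! j) = 1" "dist (S ! j) (S ! l) = 1" "dist (S ! i) (S ! l) = 1"
      using fSv ijl by simp_all
    then have "j = Suc i \<or> i = Suc j" "l = Suc j \<or> j = Suc l" "l = Suc i \<or> i = Suc l"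
      using geo ijl k_def by blast+
    moreover have "i \<noteq> j" "j \<noteq> l" "i \<noteq> l" using abc ijl by auto
    ultimately show False using three_adj[of i k j l] ijl by blast
  qed
  have cn: "\<forall>v\<in>\<Union>K1' \<inter> \<Union>K2'. \<exists>a. {v, a} \<in> cedges K1' \<inter> cedges K2'"
  proof
    fix v assume "v \<in> \<Union>K1' \<inter> \<Union>K2'"
    then have "v \<in> set Sv" using UI by blast
    then obtain i where i: "i < k" "v = Sv ! i" unfolding in_set_conv_nth lSv by blast
    show "\<exists>a. {v, a} \<in> cedges K1' \<inter> cedges K2'"
    proof (cases "Suc i < k")
      case True
      then have "{v, Sv ! Suc i} \<in> pe Sv" using adjpe i by blast
      then show ?thesis using CI by blast
    next
      case False
      then have "i - 1 < k" "i = Suc (i - 1)" using i k2 k_def by auto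
      then have "{v, Sv ! (i - 1)} \<in> pe Sv" using adjpe i by blast
      then show ?thesis using CI by blast
    qed
  qed
  have "hd Sv \<in> set Sv" using Svne by simp
  then have ne: "\<Union>K1' \<inter> \<Union>K2' \<noteq> {}" using Sv_sub1 Sv_sub2 by blast
  have G: "surface_complex (K1' \<union> K2') \<and>
    boundary_edges (K1' \<union> K2') = (boundary_edges K1' \<union> boundary_edges K2') - (cedges K1' \<inter> cedges K2')"
    by (rule glue_surface[OF R1(1) R2(1) disj sh cn ne])
  define w where "w = [last Sv] @ X1' @ [hd Sv] @ rev X2'"
  have hdSv: "hd Sv = h1 (hd S1)" unfolding Sv_def using S1ne by (simp add: hd_map)
  have lastSv: "last Sv = h1 (last S1)" unfolding Sv_def using S1ne by (simp add: last_map)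
  have oddX2: "\<And>x. x \<in> set X2 \<Longrightarrow> h2 x = 2 * x + 1" using dj2 h2N by blast
  have dis1: "set X1' \<inter> set Sv = {}"
  proof -
    have "set X1' \<inter> set Sv = h1 ` (set X1 \<inter> set S1)" unfolding X1'_def Sv_def
      using inj1 by (simp add: image_Int)
    then show ?thesis using dj1 by blast
  qed
  have dis2: "set X2' \<inter> set Sv = {}"
  proof -
    have "set X2' \<inter> set Sv = h2 ` (set X2 \<inter> set S2)" unfolding X2'_def Sv2[symmetric]
      using inj2 by (simp add: image_Int)
    then show ?thesis using dj2 by blast
  qed
  define E where "E = {{hd X2', last Sv}, {last Sv, hd X1'}, {last X1', hd Sv}, {hd Sv, last X2'}} \<union> pe X1' \<union> pe X2'"
  have cw: "cyc w = E" unfolding w_def E_def by (rule cyc_new[OF X1'ne X2'ne])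
  have BU: "boundary_edges K1' \<union> boundary_edges K2' = E \<union> pe Sv"
    unfolding R1 R2 cyc_app[OF Svne X1'ne] cyc_app[OF Svne X2'ne] E_def by (auto simp: insert_commute)
  have Edis: "E \<inter> pe Sv = {}"
  proof (rule ccontr)
    assume "E \<inter> pe Sv \<noteq> {}"
    then obtain e where e: "e \<in> E" "e \<in> pe Sv" by blast
    have esub: "e \<subseteq> set Sv" using e(2) by (rule pe_subset)
    have "hd X1' \<in> set X1'" "last X1' \<in> set X1'" using X1'ne by auto
    moreover have "hd X2' \<in> set X2'" "last X2' \<in> set X2'" using X2'ne by auto
    moreover have "e \<in> pe X1' \<Longrightarrow> e \<inter> set X1' \<noteq> {}"
      using pe_subset[of e X1'] pe_ne[of e X1'] by blast
    moreover have "e \<in> pe X2' \<Longrightarrow> e \<inter> set X2' \<noteq> {}"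
      using pe_subset[of e X2'] pe_ne[of e X2'] by blast
    ultimately have "e \<inter> (set X1' \<union> set X2') \<noteq> {}"
      using e(1) unfolding E_def by blast
    then show False using esub dis1 dis2 by blast
  qed
  have bdK: "boundary_edges (K1' \<union> K2') = cyc w"
    using G Edis unfolding CI BU cw by blast
  have dw: "distinct w"
  proof -
    have dl: "distinct ([last S1] @ X1 @ [hd S1])"
    proof -
      have "last S1 \<noteq> hd S1"
      proof -
        have "last S1 = S1 ! (k - 1)" "hd S1 = S1 ! 0" using S1ne lS1 by (simp_all add: last_conv_nth hd_conv_nth)
        moreover have "k - 1 \<noteq> 0" "k - 1 < length S1" "0 < length S1" using k2 k_def lS1 by auto
        ultimately show ?thesis using dS1 by (simp add: nth_eq_iff_index_eq)
      qed
      moreover have "last S1 \<notin> set X1" "hd S1 \<notin> set X1" using last_in_set[OF S1ne] hd_in_set[OF S1ne] dj1 by blast+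
      ultimately show ?thesis using dX1 by auto
    qed
    have "map h1 ([last S1] @ X1 @ [hd S1]) = [last Sv] @ X1' @ [hd Sv]"
      unfolding X1'_def hdSv lastSv by simp
    moreover have "distinct (map h1 ([last S1] @ X1 @ [hd S1]))"
      unfolding distinct_map using dl inj_on_subset[OF inj1 subset_UNIV] by blast
    moreover have "distinct (rev X2')" unfolding X2'_def distinct_rev distinct_map using dX2 inj_on_subset[OF inj2 subset_UNIV] by blast
    moreover have "set ([last Sv] @ X1' @ [hd Sv]) \<inter> set (rev X2') = {}"
    proof -
      have "\<And>z. z \<in> set ([last Sv] @ X1' @ [hd Sv]) \<Longrightarrow> even z"
        unfolding hdSv lastSv X1'_def h1_def by auto
      moreover have "\<And>z. z \<in> set (rev X2') \<Longrightarrow> odd z"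
        unfolding X2'_def using oddX2 by auto
      ultimately show ?thesis by blast
    qed
    ultimately show ?thesis unfolding w_def by (metis append_assoc distinct_append)
  qed
  have sw: "set w \<subseteq> \<Union>(K1' \<union> K2')"
  proof -
    have "last Sv \<in> set Sv" "hd Sv \<in> set Sv" using Svne by auto
    moreover have "set X1' \<subseteq> \<Union>K1'" unfolding X1'_def U1 using H1(3) w1 by auto
    moreover have "set X2' \<subseteq> \<Union>K2'" unfolding X2'_def U2 using H2(3) w2 by auto
    ultimately show ?thesis unfolding w_def using Sv_sub1 by auto
  qed
  have unit: "\<forall>T\<in>K1' \<union> K2'. \<forall>a\<in>T. \<forall>b\<in>T. a \<noteq> b \<longrightarrow> dist (f a) (f b) = 1"
    using unit1 unit2 by blast
  have mw: "map f w = [last S] @ X @ [hd S] @ rev Y"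
  proof -
    have "f (last Sv) = last S" unfolding lastSv fh1 using mS1 S1ne by (metis last_map)
    moreover have "f (hd Sv) = hd S" unfolding hdSv fh1 using mS1 S1ne by (metis hd_map)
    moreover have "map f X1' = X" unfolding X1'_def mX1[symmetric] map_map by (simp add: comp_def fh1)
    moreover have "map f (rev X2') = rev Y" unfolding X2'_def mX2[symmetric] rev_map[symmetric] map_map by (simp add: comp_def fh2)
    ultimately show ?thesis unfolding w_def by simp
  qed
  show ?thesis by (rule domed_intro[OF conjunct1[OF G] dw sw bdK unit mw])
qed


lemma vec3_eq: "(vector [a, b, c] = (vector [d, e, g] :: real^3)) \<longleftrightarrow> a = d \<and> b = e \<and> c = g"
  by (auto simp: vec_eq_iff forall_3)

lemma vec3_add: "vector [a, b, c] + (vector [d, e, g] :: real^3) = vector [a + d, b + e, c + g]"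
  by (simp add: vec_eq_iff forall_3)

lemma vec3_dist: "dist (vector [a, b, c]) (vector [d, e, g] :: real^3) = sqrt ((a - d)^2 + (b - e)^2 + (c - g)^2)"
  by (simp add: dist_vec_def L2_set_def sum_3 dist_real_def power2_abs)

definition refl2 :: "real^3 \<Rightarrow> real^3" where
  "refl2 x = (\<chi> i. if i = 2 then - (x $ i) else x $ i)"

lemma refl2_vec: "refl2 (vector [a, b, c]) = vector [a, - b, c]"
  by (simp add: refl2_def vec_eq_iff forall_3)

lemma refl2_dist: "dist (refl2 x) (refl2 y) = dist x y"
proof -
  have "\<And>i. dist (refl2 x $ i) (refl2 y $ i) = dist (x $ i) (y $ i)"
    by (simp add: refl2_def dist_real_def abs_minus_commute)
  then show ?thesis unfolding dist_vec_def by simp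
qed

lemma trans_dist: "dist (x + c) (y + c) = dist x (y :: real^3)"
  by (simp add: dist_norm)

lemma geo2:
  assumes "length S = 2"
  shows "\<And>i j. i < length S \<Longrightarrow> j < length S \<Longrightarrow> dist (S!i) (S!j) = 1 \<Longrightarrow> j = Suc i \<or> i = Suc j"
proof -
  fix i j assume "i < length S" "j < length S" "dist (S!i) (S!j) = 1"
  then have "i \<noteq> j" by auto
  then show "j = Suc i \<or> i = Suc j" using \<open>i < length S\<close> \<open>j < length S\<close> assms by auto
qed

lemma geo3:
  assumes "length S = 3" "dist (S!0) (S!2) \<noteq> 1"
  shows "\<And>i j. i < length S \<Longrightarrow> j < length S \<Longrightarrow> dist (S!i) (S!j) = 1 \<Longrightarrow> j = Suc i \<or> i = Suc j"
proof -
  fix i j assume ij: "i < length S" "j < length S" "dist (S!i) (S!j) = 1"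
  then have "i \<noteq> j" by auto
  moreover have "\<not> (i = 0 \<and> j = 2)" using ij assms by auto
  moreover have "\<not> (i = 2 \<and> j = 0)"
  proof
    assume "i = 2 \<and> j = 0"
    then have "dist (S!2) (S!0) = 1" using ij by simp
    then show False using assms(2) by (simp add: dist_commute)
  qed
  ultimately show "j = Suc i \<or> i = Suc j" using ij assms by auto
qed

lemma s15: "sqrt 15 * sqrt 15 = (15::real)" by simp


lemma domed_eq: "can_be_domed P \<Longrightarrow> P = Q \<Longrightarrow> can_be_domed Q" by simp

lemma tri_to_two: assumes "can_be_domed tri221" shows "can_be_domed two_rho_diamond"
proof -
  have d1: "can_be_domed ([vector [-1/2, 0, 0], vector [1/2, 0, 0]] @
      [vector [1/4, sqrt 15 / 4, 0], vector [0, sqrt 15 / 2, 0], vector [-1/4, sqrt 15 / 4, 0]])"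
    using assms by (simp add: tri221_def)
  have "can_be_domed (map refl2 tri221)" by (rule domed_iso[OF assms refl2_dist])
  then have d2: "can_be_domed ([vector [-1/2, 0, 0], vector [1/2, 0, 0]] @
      [vector [1/4, - (sqrt 15 / 4), 0], vector [0, - (sqrt 15 / 2), 0], vector [-1/4, - (sqrt 15 / 4), 0]])"
    by (rule domed_eq) (simp add: tri221_def refl2_vec)
  have "can_be_domed ([last [vector [-1/2, 0, 0], vector [1/2, 0, 0]]] @
      [vector [1/4, sqrt 15 / 4, 0], vector [0, sqrt 15 / 2, 0], vector [-1/4, sqrt 15 / 4, 0 :: real]] @
      [hd [vector [-1/2, 0, 0], vector [1/2, 0, 0 :: real]]] @
      rev [vector [1/4, - (sqrt 15 / 4), 0], vector [0, - (sqrt 15 / 2), 0], vector [-1/4, - (sqrt 15 / 4), 0]])"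
  proof (rule domed_glue[OF d1 d2])
    let ?S = "[vector [-1/2, 0, 0], vector [1/2, 0, 0 :: real]] :: (real^3) list"
    show "\<And>i j. i < length ?S \<Longrightarrow> j < length ?S \<Longrightarrow> dist (?S!i) (?S!j) = 1 \<Longrightarrow> j = Suc i \<or> i = Suc j"
      using geo2[of ?S] by simp
  qed simp_all
  then show ?thesis
    by (rule domed_eq) (simp add: two_rho_diamond_def vec3_eq)
qed

lemma rho_to_two: assumes "can_be_domed rho_diamond" shows "can_be_domed two_rho_diamond"
proof -
  have tr: "\<And>c. can_be_domed (map (\<lambda>x. x + c) rho_diamond)"
  proof -
    fix c :: "real^3"
    show "can_be_domed (map (\<lambda>x. x + c) rho_diamond)" by (rule domed_iso[OF assms]) (rule trans_dist)
  qed
  have RA: "can_be_domed ([vector [1/2, 0, 0], vector [1/4, sqrt 15 / 4, 0], vector [0, 0, 0], vector [1/4, - (sqrt 15 / 4), 0]] :: (real^3) list)"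
    using tr[of "vector [1/4, 0, 0]"] by (rule domed_eq) (simp add: rho_diamond_def vec3_add vec3_eq field_simps)
  have RB: "can_be_domed ([vector [1/4, sqrt 15 / 4, 0], vector [0, sqrt 15 / 2, 0], vector [-1/4, sqrt 15 / 4, 0], vector [0, 0, 0]] :: (real^3) list)"
    using tr[of "vector [0, sqrt 15 / 4, 0]"] by (rule domed_eq) (simp add: rho_diamond_def vec3_add vec3_eq field_simps)
  have RC: "can_be_domed ([vector [0, 0, 0], vector [-1/4, sqrt 15 / 4, 0], vector [-1/2, 0, 0], vector [-1/4, - (sqrt 15 / 4), 0]] :: (real^3) list)"
    using tr[of "vector [-1/4, 0, 0]"] by (rule domed_eq) (simp add: rho_diamond_def vec3_add vec3_eq field_simps)
  have RD: "can_be_domed ([vector [1/4, - (sqrt 15 / 4), 0], vector [0, 0, 0], vector [-1/4, - (sqrt 15 / 4), 0], vector [0, - (sqrt 15 / 2), 0]] :: (real^3) list)"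
    using tr[of "vector [0, - (sqrt 15 / 4), 0]"] by (rule domed_eq) (simp add: rho_diamond_def vec3_add vec3_eq field_simps)
  have a1: "can_be_domed (([vector [1/4, sqrt 15 / 4, 0], vector [0, 0, 0]] :: (real^3) list) @ [vector [1/4, - (sqrt 15 / 4), 0], vector [1/2, 0, 0]])"
    using domed_rotate1[OF RA] by simp
  have a2: "can_be_domed (([vector [1/4, sqrt 15 / 4, 0], vector [0, 0, 0]] :: (real^3) list) @ [vector [-1/4, sqrt 15 / 4, 0], vector [0, sqrt 15 / 2, 0]])"
    using domed_rotate1[OF domed_rotate1[OF domed_rotate1[OF domed_rev[OF RB]]]] by simp
  have P12: "can_be_domed ([vector [0, 0, 0], vector [1/4, - (sqrt 15 / 4), 0], vector [1/2, 0, 0], vector [1/4, sqrt 15 / 4, 0], vector [0, sqrt 15 / 2, 0], vector [-1/4, sqrt 15 / 4, 0]] :: (real^3) list)"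
  proof -
    let ?S = "([vector [1/4, sqrt 15 / 4, 0], vector [0, 0, 0]] :: (real^3) list)"
    have g: "\<And>i j. i < length ?S \<Longrightarrow> j < length ?S \<Longrightarrow> dist (?S!i) (?S!j) = 1 \<Longrightarrow> j = Suc i \<or> i = Suc j"
      using geo2[of ?S] by simp
    have "can_be_domed ([last ?S] @ [vector [1/4, - (sqrt 15 / 4), 0], vector [1/2, 0, 0]] @ [hd ?S] @ rev [vector [-1/4, sqrt 15 / 4, 0], vector [0, sqrt 15 / 2, 0]])"
      by (rule domed_glue[OF a1 a2 _ _ _ g]) simp_all
    then show ?thesis by simp
  qed
  have c1: "can_be_domed (([vector [-1/4, - (sqrt 15 / 4), 0], vector [0, 0, 0]] :: (real^3) list) @ [vector [-1/4, sqrt 15 / 4, 0], vector [-1/2, 0, 0]])"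
    using domed_rotate1[OF domed_rotate1[OF domed_rotate1[OF RC]]] by simp
  have c2: "can_be_domed (([vector [-1/4, - (sqrt 15 / 4), 0], vector [0, 0, 0]] :: (real^3) list) @ [vector [1/4, - (sqrt 15 / 4), 0], vector [0, - (sqrt 15 / 2), 0]])"
    using domed_rotate1[OF domed_rev[OF RD]] by simp
  have P34: "can_be_domed ([vector [0, 0, 0], vector [-1/4, sqrt 15 / 4, 0], vector [-1/2, 0, 0], vector [-1/4, - (sqrt 15 / 4), 0], vector [0, - (sqrt 15 / 2), 0], vector [1/4, - (sqrt 15 / 4), 0]] :: (real^3) list)"
  proof -
    let ?S = "([vector [-1/4, - (sqrt 15 / 4), 0], vector [0, 0, 0]] :: (real^3) list)"
    have g: "\<And>i j. i < length ?S \<Longrightarrow> j < length ?S \<Longrightarrow> dist (?S!i) (?S!j) = 1 \<Longrightarrow> j = Suc i \<or> i = Suc j"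
      using geo2[of ?S] by simp
    have "can_be_domed ([last ?S] @ [vector [-1/4, sqrt 15 / 4, 0], vector [-1/2, 0, 0]] @ [hd ?S] @ rev [vector [1/4, - (sqrt 15 / 4), 0], vector [0, - (sqrt 15 / 2), 0]])"
      by (rule domed_glue[OF c1 c2 _ _ _ g]) simp_all
    then show ?thesis by simp
  qed
  have e1: "can_be_domed (([vector [-1/4, sqrt 15 / 4, 0], vector [0, 0, 0], vector [1/4, - (sqrt 15 / 4), 0]] :: (real^3) list) @ [vector [1/2, 0, 0], vector [1/4, sqrt 15 / 4, 0], vector [0, sqrt 15 / 2, 0]])"
    using domed_rotate1[OF domed_rotate1[OF domed_rotate1[OF domed_rotate1[OF domed_rotate1[OF P12]]]]] by simp
  have e2: "can_be_domed (([vector [-1/4, sqrt 15 / 4, 0], vector [0, 0, 0], vector [1/4, - (sqrt 15 / 4), 0]] :: (real^3) list) @ [vector [0, - (sqrt 15 / 2), 0], vector [-1/4, - (sqrt 15 / 4), 0], vector [-1/2, 0, 0]])"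
    using domed_rotate1[OF domed_rotate1[OF domed_rotate1[OF domed_rotate1[OF domed_rev[OF P34]]]]] by simp
  let ?S = "([vector [-1/4, sqrt 15 / 4, 0], vector [0, 0, 0], vector [1/4, - (sqrt 15 / 4), 0]] :: (real^3) list)"
  have dd: "dist (?S!0) (?S!2) \<noteq> 1"
  proof -
    have "dist (?S!0) (?S!2) = sqrt 4"
      by (simp add: vec3_dist power2_eq_square field_simps)
    then show ?thesis by simp
  qed
  have g: "\<And>i j. i < length ?S \<Longrightarrow> j < length ?S \<Longrightarrow> dist (?S!i) (?S!j) = 1 \<Longrightarrow> j = Suc i \<or> i = Suc j"
    using geo3[of ?S] dd by simp
  have "can_be_domed ([last ?S] @ [vector [1/2, 0, 0], vector [1/4, sqrt 15 / 4, 0], vector [0, sqrt 15 / 2, 0]] @ [hd ?S] @ rev [vector [0, - (sqrt 15 / 2), 0], vector [-1/4, - (sqrt 15 / 4), 0], vector [-1/2, 0, 0]])"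
    by (rule domed_glue[OF e1 e2 _ _ _ g]) simp_all
  then have "can_be_domed (rotate1 ([last ?S] @ [vector [1/2, 0, 0], vector [1/4, sqrt 15 / 4, 0], vector [0, sqrt 15 / 2, 0]] @ [hd ?S] @ rev [vector [0, - (sqrt 15 / 2), 0], vector [-1/4, - (sqrt 15 / 4), 0], vector [-1/2, 0, 0]]))"
    by (rule domed_rotate1)
  then show ?thesis by (rule domed_eq) (simp add: two_rho_diamond_def vec3_eq)
qed

theorem mainTheorem18:
  assumes "\<not> can_be_domed two_rho_diamond"
  shows "\<not> can_be_domed tri221 \<and> \<not> can_be_domed rho_diamond"
  using assms tri_to_two rho_to_two by blast

end
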